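(* Let $(A,+,\circ)$ be a left brace which has a transitive cycle base, let $g$ be an element of a transitive cycle base of $A$, and let $(A,\bullet)$ be the cycle set given by $a\bullet b:=\lambda_a(g)^{-}\circ b$ for all $a,b\in A$. Let $H:=\{h\in A\mid \lambda_h(g)=g\}$. Then $H$ is a subgroup of $(A,\circ)$, the retraction $\mathrm{Ret}(A,\bullet)$ coincides with the set $A/H$ of left cosets $a\circ H$ (i.e. $\sigma_a=\sigma_b$ in $(A,\bullet)$ if and only if $a^{-}\circ b\in H$), and $\mathrm{Soc}(A)\subseteq H$.
   Context: A left brace is a set $A$ with two operations such that $(A,+)$ is an abelian group, $(A,\circ)$ is a group, and $a\circ(b+c)=a\circ b-a+a\circ c$ for all $a,b,c$. For $a\in A$, $\lambda_a(b):=-a+a\circ b$; each $\lambda_a$ is an automorphism of $(A,+)$ and $a\mapsto\lambda_a$ is a homomorphism $(A,\circ)\to\mathrm{Aut}(A,+)$. $a^{-}$ denotes the inverse of $a$ in $(A,\circ)$. $\mathrm{Soc}(A):=\{a\in A\mid \lambda_a=\mathrm{id}_A\}$. A transitive cycle base is a subset of $A$ which is a single orbit of the action $\lambda$ of $(A,\circ)$ on $A$ and which generates $(A,+)$. A cycle set is a set $X$ with a binary operation such that each left multiplication $\sigma_x:y\mapsto x\cdot y$ is bijective and $(x\cdot y)\cdot(x\cdot z)=(y\cdot x)\cdot(y\cdot z)$; the retraction $\mathrm{Ret}(X)$ is the quotient of $X$ by the equivalence $x\sim y\iff\sigma_x=\sigma_y$. *)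

theory Defs
  imports Main
begin

text \<open>A left brace whose additive group is the type 'a (class ab_group_add, carrier UNIV)
  and whose multiplicative operation is circ.\<close>

definition is_group_op :: "('a \<Rightarrow> 'a \<Rightarrow> 'a) \<Rightarrow> bool" where
  "is_group_op circ \<longleftrightarrow>
     (\<forall>a b c. circ (circ a b) c = circ a (circ b c)) \<and>
     (\<exists>e. (\<forall>a. circ e a = a \<and> circ a e = a) \<and> (\<forall>a. \<exists>b. circ a b = e \<and> circ b a = e))"

definition left_brace :: "('a::ab_group_add \<Rightarrow> 'a \<Rightarrow> 'a) \<Rightarrow> bool" where
  "left_brace circ \<longleftrightarrow> is_group_op circ \<and>
     (\<forall>a b c. circ a (b + c) = circ a b - a + circ a c)"

definition circ_one :: "('a \<Rightarrow> 'a \<Rightarrow> 'a) \<Rightarrow> 'a" where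
  "circ_one circ = (THE e. \<forall>a. circ e a = a \<and> circ a e = a)"

definition circ_inv :: "('a \<Rightarrow> 'a \<Rightarrow> 'a) \<Rightarrow> 'a \<Rightarrow> 'a" where
  "circ_inv circ a = (THE b. circ a b = circ_one circ \<and> circ b a = circ_one circ)"

definition blambda :: "('a::ab_group_add \<Rightarrow> 'a \<Rightarrow> 'a) \<Rightarrow> 'a \<Rightarrow> 'a \<Rightarrow> 'a" where
  "blambda circ a b = - a + circ a b"

definition socle :: "('a::ab_group_add \<Rightarrow> 'a \<Rightarrow> 'a) \<Rightarrow> 'a set" where
  "socle circ = {a. blambda circ a = id}"

definition add_span :: "'a::ab_group_add set \<Rightarrow> 'a set" where
  "add_span X = \<Inter>{S. X \<subseteq> S \<and> 0 \<in> S \<and> (\<forall>x\<in>S. \<forall>y\<in>S. x + y \<in> S) \<and> (\<forall>x\<in>S. - x \<in> S)}"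

definition transitive_cycle_base :: "('a::ab_group_add \<Rightarrow> 'a \<Rightarrow> 'a) \<Rightarrow> 'a set \<Rightarrow> bool" where
  "transitive_cycle_base circ X \<longleftrightarrow>
     (\<exists>x. X = {blambda circ a x | a. True}) \<and> add_span X = UNIV"

definition is_subgroup_op :: "('a \<Rightarrow> 'a \<Rightarrow> 'a) \<Rightarrow> 'a set \<Rightarrow> bool" where
  "is_subgroup_op circ H \<longleftrightarrow> circ_one circ \<in> H \<and>
     (\<forall>x\<in>H. \<forall>y\<in>H. circ x y \<in> H) \<and> (\<forall>x\<in>H. circ_inv circ x \<in> H)"

text \<open>The cycle set operation a \<bullet> b = \<lambda>_a(g)^- \<circ> b; sigma_a = (\<lambda>b. a \<bullet> b).\<close>
definition cs_op :: "('a::ab_group_add \<Rightarrow> 'a \<Rightarrow> 'a) \<Rightarrow> 'a \<Rightarrow> 'a \<Rightarrow> 'a \<Rightarrow> 'a" where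
  "cs_op circ g a b = circ (circ_inv circ (blambda circ a g)) b"

end

theory Submission
  imports Defs
begin

locale brc =
  fixes circ :: "'a::ab_group_add \<Rightarrow> 'a \<Rightarrow> 'a"
  assumes lb: "left_brace circ"
begin

lemma assoc: "circ (circ a b) c = circ a (circ b c)"
  using lb unfolding left_brace_def is_group_op_def by blast

lemma distr: "circ a (b + c) = circ a b - a + circ a c"
  using lb unfolding left_brace_def by blast

lemma ex_e: "\<exists>e. (\<forall>a. circ e a = a \<and> circ a e = a) \<and> (\<forall>a. \<exists>b. circ a b = e \<and> circ b a = e)"
  using lb unfolding left_brace_def is_group_op_def by blast

lemma one_unit: "circ (circ_one circ) a = a \<and> circ a (circ_one circ) = a"
      and one_inv: "\<exists>b. circ a b = circ_one circ \<and> circ b a = circ_one circ"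
proof -
  obtain e where e: "\<forall>a. circ e a = a \<and> circ a e = a" "\<forall>a. \<exists>b. circ a b = e \<and> circ b a = e"
    using ex_e by blast
  have "circ_one circ = e" unfolding circ_one_def
  proof (rule the_equality)
    show "\<forall>a. circ e a = a \<and> circ a e = a" using e by blast
    fix e' assume "\<forall>a. circ e' a = a \<and> circ a e' = a"
    then show "e' = e" using e(1) by metis
  qed
  then show "circ (circ_one circ) a = a \<and> circ a (circ_one circ) = a"
       "\<exists>b. circ a b = circ_one circ \<and> circ b a = circ_one circ" using e by auto
qed

lemma inv: "circ a (circ_inv circ a) = circ_one circ \<and> circ (circ_inv circ a) a = circ_one circ"
proof -
  obtain b where b: "circ a b = circ_one circ \<and> circ b a = circ_one circ" using one_inv by blast
  have "circ_inv circ a = b" unfolding circ_inv_def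
  proof (rule the_equality)
    show "circ a b = circ_one circ \<and> circ b a = circ_one circ" by fact
    fix b' assume h: "circ a b' = circ_one circ \<and> circ b' a = circ_one circ"
    have "b' = circ b' (circ a b)" using b one_unit by simp
    also have "\<dots> = circ (circ b' a) b" by (simp add: assoc)
    also have "\<dots> = b" using h one_unit by simp
    finally show "b' = b" .
  qed
  then show ?thesis using b by simp
qed

lemma one_zero: "circ_one circ = 0"
proof -
  have "circ (circ_one circ) (0 + 0) = circ (circ_one circ) 0 - circ_one circ + circ (circ_one circ) 0"
    by (rule distr)
  then show ?thesis using one_unit by simp
qed

lemma lam_add: "blambda circ a (x + y) = blambda circ a x + blambda circ a y"
  unfolding blambda_def using distr[of a x y] by (simp add: algebra_simps)

lemma circ_lam: "circ a x = a + blambda circ a x"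
  unfolding blambda_def by simp

lemma lam_hom: "blambda circ (circ a b) c = blambda circ a (blambda circ b c)"
proof -
  have "circ a (circ b c) = circ a b + blambda circ a (blambda circ b c)"
    by (metis circ_lam lam_add add.assoc)
  then show ?thesis unfolding blambda_def by (simp add: assoc algebra_simps)
qed

lemma lam_one: "blambda circ (circ_one circ) x = x"
  unfolding blambda_def using one_unit one_zero by simp

lemma lam_inv1: "blambda circ (circ_inv circ a) (blambda circ a x) = x"
  by (metis inv lam_hom lam_one)

lemma lam_inv2: "blambda circ a (blambda circ (circ_inv circ a) x) = x"
  by (metis inv lam_hom lam_one)

lemma rcancel: "circ x z = circ y z \<Longrightarrow> x = y"
  by (metis assoc inv one_unit)

end

theorem mainTheorem1:
  fixes circ :: "'a::ab_group_add \<Rightarrow> 'a \<Rightarrow> 'a" and g :: 'a and X :: "'a set"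
  assumes "left_brace circ"
    and "transitive_cycle_base circ X"
    and "g \<in> X"
  defines "H \<equiv> {h. blambda circ h g = g}"
  shows "is_subgroup_op circ H
    \<and> (\<forall>a b. cs_op circ g a = cs_op circ g b \<longleftrightarrow> circ (circ_inv circ a) b \<in> H)
    \<and> socle circ \<subseteq> H"
proof -
  interpret brc circ by (rule brc.intro, fact)
  have 1: "is_subgroup_op circ H"
    unfolding is_subgroup_op_def H_def
    by (auto simp: lam_one lam_hom) (metis lam_inv1)
  have 2: "cs_op circ g a = cs_op circ g b \<longleftrightarrow> circ (circ_inv circ a) b \<in> H" for a b
  proof -
    have "cs_op circ g a = cs_op circ g b \<longleftrightarrow>
          circ_inv circ (blambda circ a g) = circ_inv circ (blambda circ b g)"
      unfolding cs_op_def
      by (metis one_unit)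
    also have "\<dots> \<longleftrightarrow> blambda circ a g = blambda circ b g"
      by (metis inv rcancel)
    also have "\<dots> \<longleftrightarrow> circ (circ_inv circ a) b \<in> H"
      unfolding H_def by (auto simp: lam_hom) (metis lam_inv1, metis lam_inv2)
    finally show ?thesis .
  qed
  have 3: "socle circ \<subseteq> H" unfolding socle_def H_def by auto
  show ?thesis using 1 2 3 by blast
qed

end
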